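(* Let $f,g:\mathbb{R}^n\to\mathbb{R}$ satisfy assumptions (A1)–(A4) below, let $\zeta\in[0,1)$ and $x_0\in\Omega=\{x:g(x)\le0\}$. Let $x_\zeta^\sharp=x(t^\sharp;\zeta,x_0)$ be the solution point, where $t^\sharp$ is the first time with $g(x(t^\sharp;\zeta,x_0))=0$ (so $g(x(t;\zeta,x_0))<0$ for $t<t^\sharp$). Then $$\epsilon(x_\zeta^\sharp)=\left|\frac{\nabla f(x_\zeta^\sharp)}{|\nabla f(x_\zeta^\sharp)|}+\frac{\nabla g(x_\zeta^\sharp)}{|\nabla g(x_\zeta^\sharp)|}\right|\le\sqrt{2(1-\zeta)}.$$
   Context: Assumptions: (A1) $\lim_{|x|\to\infty} f(x)=+\infty$; (A2) $\nabla f(x)\neq 0$ for all $x\in\Omega$; (A3) $\nabla g(x)\neq 0$ for all $x\in\Omega$; (A4) $f,g$ twice continuously differentiable. For $\zeta\in[0,1)$, $\mathbf{s}_\zeta(x)=-\frac{\nabla f(x)}{|\nabla f(x)|}-\zeta\frac{\nabla g(x)}{|\nabla g(x)|}$ ($|\cdot|$ Euclidean norm), and $x(t;\zeta,x_0)$ is the solution of $\frac{dx}{dt}=\mathbf{s}_\zeta(x)$, $x(0)=x_0$, on its maximal interval of existence in $E=\{x:\nabla f(x)\ne0,\nabla g(x)\ne0\}$. *)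

theory Defs
  imports "HOL-Analysis.Analysis"
begin

definition grad :: "('a::real_inner \<Rightarrow> real) \<Rightarrow> 'a \<Rightarrow> 'a" where
  "grad f x = (THE D. GDERIV f x :> D)"

definition C2 :: "('a::euclidean_space \<Rightarrow> real) \<Rightarrow> bool" where
  "C2 f \<longleftrightarrow> (\<forall>x. f differentiable (at x)) \<and>
     (\<exists>H. (\<forall>x. (grad f has_derivative H x) (at x)) \<and> (\<forall>v. continuous_on UNIV (\<lambda>x. H x v)))"

definition s_field :: "('a::euclidean_space \<Rightarrow> real) \<Rightarrow> ('a \<Rightarrow> real) \<Rightarrow> real \<Rightarrow> 'a \<Rightarrow> 'a" where
  "s_field f g \<zeta> x = - (grad f x /\<^sub>R norm (grad f x)) - \<zeta> *\<^sub>R (grad g x /\<^sub>R norm (grad g x))"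

definition E_set :: "('a::euclidean_space \<Rightarrow> real) \<Rightarrow> ('a \<Rightarrow> real) \<Rightarrow> 'a set" where
  "E_set f g = {x. grad f x \<noteq> 0 \<and> grad g x \<noteq> 0}"

definition eps_err :: "('a::euclidean_space \<Rightarrow> real) \<Rightarrow> ('a \<Rightarrow> real) \<Rightarrow> 'a \<Rightarrow> real" where
  "eps_err f g x = norm (grad f x /\<^sub>R norm (grad f x) + grad g x /\<^sub>R norm (grad g x))"

end

theory Submission
  imports Defs
begin

lemma grad_works:
  fixes g :: "'a::euclidean_space \<Rightarrow> real"
  assumes "g differentiable (at y)"
  shows "(g has_derivative (\<lambda>h. h \<bullet> grad g y)) (at y)"
proof -
  obtain F where F: "(g has_derivative F) (at y)" using assms unfolding differentiable_def by blast
  have lin: "linear F" using F has_derivative_linear by blast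
  define D where "D = adjoint F 1"
  have FD: "F = (\<lambda>h. h \<bullet> D)"
    using adjoint_works[OF lin, of _ 1] unfolding D_def by (auto simp: fun_eq_iff)
  have ex: "GDERIV g y :> D" using F FD by (simp add: gderiv_def)
  have "GDERIV g y :> grad g y"
    unfolding grad_def
  proof (rule theI[of _ D])
    show "GDERIV g y :> D" by fact
  next
    fix D' assume "GDERIV g y :> D'"
    then have "(\<lambda>h. h \<bullet> D') = (\<lambda>h. h \<bullet> D)"
      using has_derivative_unique ex by (auto simp: gderiv_def)
    then show "D' = D" by (metis vector_eq_ldot)
  qed
  then show ?thesis by (simp add: gderiv_def)
qed

lemma deriv_nonneg_left:
  fixes h :: "real \<Rightarrow> real"
  assumes "0 < b" "(h has_real_derivative d) (at b within {0..b})"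
    and "\<forall>t\<in>{0..<b}. h t < h b"
  shows "0 \<le> d"
proof -
  have lim: "((\<lambda>y. (h y - h b) / (y - b)) \<longlongrightarrow> d) (at_left b)"
    using assms(2) at_within_Icc_at_left[OF assms(1)] by (simp add: has_field_derivative_iff)
  have ev: "eventually (\<lambda>y. 0 \<le> (h y - h b) / (y - b)) (at_left b)"
  proof -
    have "eventually (\<lambda>y. y \<in> {0<..<b}) (at_left b)"
      using assms(1) eventually_at_left_real by blast
    then show ?thesis
    proof (rule eventually_mono)
      fix y assume "y \<in> {0<..<b}"
      then have "h y - h b < 0" "y - b < 0" using assms(3) by auto
      then show "0 \<le> (h y - h b) / (y - b)" by (simp add: divide_nonpos_neg)
    qed
  qed
  show ?thesis
    by (rule tendsto_lowerbound[OF lim ev]) (simp add: trivial_limit_at_left_real)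
qed

theorem theorem5p12:
  fixes f g :: "real ^ 'n \<Rightarrow> real" and \<zeta> :: real and x0 :: "real ^ 'n"
    and x :: "real \<Rightarrow> real ^ 'n" and tsharp :: real
  defines "\<Omega> \<equiv> {y. g y \<le> 0}"
  assumes A1: "filterlim f at_top at_infinity"
    and A2: "\<forall>y\<in>\<Omega>. grad f y \<noteq> 0"
    and A3: "\<forall>y\<in>\<Omega>. grad g y \<noteq> 0"
    and A4: "C2 f" "C2 g"
    and zeta: "0 \<le> \<zeta>" "\<zeta> < 1"
    and x0: "x0 \<in> \<Omega>"
    and init: "x 0 = x0"
    and tpos: "0 < tsharp"
    and sol: "\<forall>t\<in>{0..tsharp}. x t \<in> E_set f g \<and>
                 (x has_vector_derivative s_field f g \<zeta> (x t)) (at t within {0..tsharp})"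
    and first: "\<forall>t\<in>{0..<tsharp}. g (x t) < 0"
    and hit: "g (x tsharp) = 0"
  shows "eps_err f g (x tsharp) \<le> sqrt (2 * (1 - \<zeta>))"
proof -
  define y where "y = x tsharp"
  define G where "G = grad g y"
  define F where "F = grad f y"
  define S where "S = s_field f g \<zeta> y"
  define u where "u = F /\<^sub>R norm F"
  define v where "v = G /\<^sub>R norm G"
  have ts: "tsharp \<in> {0..tsharp}" using tpos by auto
  have E: "y \<in> E_set f g" using sol ts unfolding y_def by blast
  have Fn: "F \<noteq> 0" and Gn: "G \<noteq> 0" using E unfolding E_set_def F_def G_def by auto
  have xd: "(x has_vector_derivative S) (at tsharp within {0..tsharp})"
    using sol ts unfolding S_def y_def by blast
  have gd: "g differentiable (at y)" using A4(2) unfolding C2_def by blast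
  have gD: "(g has_derivative (\<lambda>h. h \<bullet> G)) (at (x tsharp) within x ` {0..tsharp})"
    using grad_works[OF gd] unfolding G_def y_def by (rule has_derivative_at_withinI)
  have "((g \<circ> x) has_derivative ((\<lambda>h. h \<bullet> G) \<circ> (\<lambda>r. r *\<^sub>R S))) (at tsharp within {0..tsharp})"
    using diff_chain_within[OF xd[unfolded has_vector_derivative_def] gD] .
  then have "((g \<circ> x) has_real_derivative (S \<bullet> G)) (at tsharp within {0..tsharp})"
    by (simp add: has_field_derivative_def o_def mult.commute[of _ "S \<bullet> G"])
  moreover have "\<forall>t\<in>{0..<tsharp}. (g \<circ> x) t < (g \<circ> x) tsharp" using first hit by simp
  ultimately have SG: "0 \<le> S \<bullet> G" using deriv_nonneg_left[OF tpos] by blast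
  have Sdef: "S = - u - \<zeta> *\<^sub>R v" unfolding S_def s_field_def u_def v_def F_def G_def by simp
  have Geq: "G = norm G *\<^sub>R v" using Gn unfolding v_def by simp
  have "S \<bullet> G = norm G * (S \<bullet> v)" by (subst Geq) simp
  then have "0 \<le> S \<bullet> v" using SG Gn by (simp add: zero_le_mult_iff)
  moreover have nu: "u \<bullet> u = 1" using Fn unfolding u_def by (simp add: inner_commute power2_norm_eq_inner[symmetric])
  moreover have nv: "v \<bullet> v = 1" using Gn unfolding v_def by (simp add: power2_norm_eq_inner[symmetric])
  ultimately have uv: "u \<bullet> v \<le> - \<zeta>" unfolding Sdef by (simp add: inner_diff_left)
  have "(norm (u + v))\<^sup>2 = u \<bullet> u + 2 * (u \<bullet> v) + v \<bullet> v"
    by (simp add: power2_norm_eq_inner inner_add_left inner_add_right inner_commute)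
  also have "\<dots> \<le> 2 * (1 - \<zeta>)" using nu nv uv by simp
  finally have "norm (u + v) \<le> sqrt (2 * (1 - \<zeta>))" by (rule real_le_rsqrt)
  then show ?thesis unfolding eps_err_def u_def v_def F_def G_def y_def .
qed

end
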